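(* Let ${\mathbf{X}}\in\mathbb{R}^{m\times n}$ and suppose ${\mathbf{X}}={\mathbf{U}}_0{\mathbf{V}}_0^T$ with ${\mathbf{U}}_0\in\mathbb{R}_+^{m\times r}$, ${\mathbf{V}}_0\in\mathbb{R}_+^{n\times r}$ both of full column rank $r$, where $r\le\min\{m,n\}$. Let ${\mathbf{A}}_1\in\mathbb{R}^{r\times m}$ and ${\mathbf{A}}_2\in\mathbb{R}^{n\times r}$ be such that the $r\times r$ matrix ${\mathbf{A}}_1{\mathbf{X}}{\mathbf{A}}_2$ is invertible. Let $\lambda_1,\lambda_2>0$ and let $(\tilde{\mathbf{U}},\tilde{\mathbf{V}})$ be any minimizer, over ${\mathbf{U}}\in\mathbb{R}_+^{m\times r}$, ${\mathbf{V}}\in\mathbb{R}_+^{n\times r}$, of $$\|{\mathbf{A}}_1({\mathbf{X}}-{\mathbf{U}}{\mathbf{V}}^T)\|_F^2+\|({\mathbf{X}}-{\mathbf{U}}{\mathbf{V}}^T){\mathbf{A}}_2\|_F^2+\lambda_1\|({\mathbf{I}}_m-\mathbf{P}_1){\mathbf{U}}{\mathbf{V}}^T\|_F^2+\lambda_2\|{\mathbf{U}}{\mathbf{V}}^T({\mathbf{I}}_n-\mathbf{P}_2)\|_F^2,$$ where $\mathbf{P}_1\in\mathbb{R}^{m\times m}$ is the orthogonal projection onto the column space of ${\mathbf{X}}{\mathbf{A}}_2$ and $\mathbf{P}_2\in\mathbb{R}^{n\times n}$ is the orthogonal projection onto the row space of ${\mathbf{A}}_1{\mathbf{X}}$. Then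 ${\mathbf{X}}=\tilde{\mathbf{U}}\tilde{\mathbf{V}}^T$.
   Context: $\mathbb{R}_+^{a\times b}$ denotes the set of $a\times b$ matrices with all entries nonnegative. $\|\cdot\|_F$ is the Frobenius norm. *)

theory Defs
  imports "HOL-Analysis.Analysis"
begin

definition frob_sq :: "real^'c^'r \<Rightarrow> real" where
  "frob_sq M = (\<Sum>i\<in>UNIV. \<Sum>j\<in>UNIV. (M $ i $ j)^2)"

definition nonneg_mat :: "real^'c^'r \<Rightarrow> bool" where
  "nonneg_mat M \<longleftrightarrow> (\<forall>i j. 0 \<le> M $ i $ j)"

definition orth_proj_mat :: "(real^'n) set \<Rightarrow> real^'n^'n" where
  "orth_proj_mat S = (THE P. \<forall>x. P *v x \<in> S \<and> (\<forall>y\<in>S. inner (x - P *v x) y = 0))"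

definition col_space :: "real^'c^'r \<Rightarrow> (real^'r) set" where
  "col_space M = span (columns M)"

definition row_space :: "real^'c^'r \<Rightarrow> (real^'c) set" where
  "row_space M = span (rows M)"

definition nmf_obj ::
  "real^'n^'m \<Rightarrow> real^'m^'r \<Rightarrow> real^'r^'n \<Rightarrow> real \<Rightarrow> real \<Rightarrow> real^'r^'m \<Rightarrow> real^'r^'n \<Rightarrow> real" where
  "nmf_obj X A1 A2 l1 l2 U V =
     (let P1 = orth_proj_mat (col_space (X ** A2));
          P2 = orth_proj_mat (row_space (A1 ** X));
          W = U ** transpose V
      in frob_sq (A1 ** (X - W)) + frob_sq ((X - W) ** A2)
         + l1 * frob_sq ((mat 1 - P1) ** W) + l2 * frob_sq (W ** (mat 1 - P2)))"

end

theory Submission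
  imports Defs
begin

lemma proj_exists:
  fixes T :: "(real^'n) set"
  shows "\<exists>P::real^'n^'n. \<forall>x. P *v x \<in> span T \<and> (\<forall>y\<in>span T. inner (x - P *v x) y = 0)"
proof -
  obtain B where B: "B \<subseteq> span T" "pairwise orthogonal B" "span B = span T"
    using orthogonal_basis_subspace[of "span T"] subspace_span by metis
  have fin: "finite B"
    using B(2) pairwise_orthogonal_imp_finite by blast
  define p where "p x = (\<Sum>b\<in>B. (b \<bullet> x / (b \<bullet> b)) *\<^sub>R b)" for x :: "real^'n"
  have lin: "linear p"
    unfolding p_def
    by (auto simp: linear_iff inner_add_right add_divide_distrib scaleR_add_left sum.distrib
        scaleR_sum_right)
  show ?thesis
  proof (intro exI allI conjI ballI)
    fix x
    show "matrix p *v x \<in> span T"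
      unfolding matrix_vector_mul(2)[OF lin] p_def
      using B(1) by (simp add: span_mul span_sum subsetD)
    fix y assume "y \<in> span T"
    hence "orthogonal y (x - p x)"
      using Gram_Schmidt_step[OF B(2), of y x] B(3) by (simp add: p_def)
    thus "inner (x - matrix p *v x) y = 0"
      unfolding matrix_vector_mul(2)[OF lin] by (simp add: orthogonal_def inner_commute)
  qed
qed

lemma proj_prop:
  fixes T :: "(real^'n) set"
  defines "P \<equiv> orth_proj_mat (span T)"
  shows "\<forall>x. P *v x \<in> span T \<and> (\<forall>y\<in>span T. inner (x - P *v x) y = 0)"
proof -
  obtain P0 :: "real^'n^'n" where P0: "\<forall>x. P0 *v x \<in> span T \<and> (\<forall>y\<in>span T. inner (x - P0 *v x) y = 0)"
    using proj_exists by blast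
  have uniq: "Q = P0" if Q: "\<forall>x. Q *v x \<in> span T \<and> (\<forall>y\<in>span T. inner (x - Q *v x) y = 0)" for Q
  proof (rule matrix_eq[THEN iffD2], rule allI)
    fix x
    have d: "Q *v x - P0 *v x \<in> span T" using Q P0 span_diff by blast
    have "inner (Q *v x - P0 *v x) (Q *v x - P0 *v x)
        = inner (x - P0 *v x) (Q *v x - P0 *v x) - inner (x - Q *v x) (Q *v x - P0 *v x)"
      by (simp add: inner_diff_left)
    also have "\<dots> = 0"
    proof -
      have "inner (x - P0 *v x) (Q *v x - P0 *v x) = 0" using d P0 by blast
      moreover have "inner (x - Q *v x) (Q *v x - P0 *v x) = 0" using d Q by blast
      ultimately show ?thesis by simp
    qed
    finally show "Q *v x = P0 *v x" by simp
  qed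
  have "P = P0" unfolding P_def orth_proj_mat_def
  proof (rule the_equality)
    show "\<forall>x. P0 *v x \<in> span T \<and> (\<forall>y\<in>span T. inner (x - P0 *v x) y = 0)" by (rule P0)
  next
    fix Q :: "real^'n^'n"
    assume "\<forall>x. Q *v x \<in> span T \<and> (\<forall>y\<in>span T. inner (x - Q *v x) y = 0)"
    thus "Q = P0" by (rule uniq)
  qed
  thus ?thesis using P0 by simp
qed

lemma proj_id:
  fixes T :: "(real^'n) set"
  assumes "y \<in> span T"
  shows "orth_proj_mat (span T) *v y = y"
proof -
  let ?P = "orth_proj_mat (span T)"
  have d: "y - ?P *v y \<in> span T" using proj_prop[of T] assms span_diff by blast
  have "inner (y - ?P *v y) (y - ?P *v y) = 0" using proj_prop[of T] d by blast
  thus ?thesis by simp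
qed

lemma proj_sym:
  fixes T :: "(real^'n) set"
  shows "transpose (orth_proj_mat (span T)) = orth_proj_mat (span T)"
proof -
  let ?P = "orth_proj_mat (span T)"
  have sym: "inner (?P *v x) y = inner x (?P *v y)" for x y
  proof -
    have "inner (?P *v x) y = inner (?P *v x) (?P *v y) + inner (?P *v x) (y - ?P *v y)"
      by (simp add: inner_diff_right)
    also have "inner (?P *v x) (y - ?P *v y) = 0"
      using proj_prop[of T] by (simp add: inner_commute)
    also have "inner x (?P *v y) = inner (?P *v x) (?P *v y) + inner (x - ?P *v x) (?P *v y)"
      by (simp add: inner_diff_left)
    moreover have "inner (x - ?P *v x) (?P *v y) = 0"
      using proj_prop[of T] by blast
    ultimately show ?thesis by simp
  qed
  show ?thesis
  proof (rule matrix_eq[THEN iffD2], rule allI)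
    fix y
    have "inner x (transpose ?P *v y) = inner x (?P *v y)" for x
    proof -
      have "inner x (transpose ?P *v y) = inner (y v* ?P) x" by (simp add: inner_commute)
      also have "\<dots> = inner y (?P *v x)" by (rule dot_lmul_matrix)
      also have "\<dots> = inner (?P *v x) y" by (rule inner_commute)
      also have "\<dots> = inner x (?P *v y)" by (rule sym)
      finally show ?thesis .
    qed
    note h = this
    define d where "d = transpose ?P *v y - ?P *v y"
    have "inner d d = inner d (transpose ?P *v y) - inner d (?P *v y)"
      unfolding d_def[of] by (rule inner_diff_right)
    also have "\<dots> = 0" using h[of d] by simp
    finally have "d = 0" by simp
    thus "transpose ?P *v y = ?P *v y" unfolding d_def by simp
  qed
qed

lemma span_columns_range:
  fixes A :: "real^'n^'m"
  assumes "y \<in> span (columns A)"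
  shows "\<exists>m. y = A *v m"
proof -
  have "span (columns A) \<subseteq> range ((*v) A)"
    by (rule span_minimal) (auto simp: columns_image_basis intro!: linear_subspace_image subspace_UNIV)
  thus ?thesis using assms by blast
qed

lemma transpose_diff': "transpose (A - B) = transpose A - (transpose B :: real^_^_)"
  by (simp add: transpose_def vec_eq_iff)

lemma transpose_zero': "transpose (0::real^_^_) = 0"
  by (simp add: transpose_def vec_eq_iff)

lemma frob_sq_nonneg: "frob_sq M \<ge> 0"
  unfolding frob_sq_def by (intro sum_nonneg) auto

lemma frob_sq_zero: "frob_sq M = 0 \<Longrightarrow> M = 0"
  unfolding frob_sq_def
  by (simp add: sum_nonneg sum_nonneg_eq_0_iff vec_eq_iff)

lemma frob_sq_0 [simp]: "frob_sq 0 = 0"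
  unfolding frob_sq_def by simp

theorem mainTheorem1:
  fixes X :: "real^'n^'m" and U0 :: "real^'r^'m" and V0 :: "real^'r^'n"
    and A1 :: "real^'m^'r" and A2 :: "real^'r^'n"
    and l1 l2 :: real and Ut :: "real^'r^'m" and Vt :: "real^'r^'n"
  assumes "CARD('r) \<le> CARD('m)" and "CARD('r) \<le> CARD('n)"
    and "X = U0 ** transpose V0"
    and "nonneg_mat U0" and "nonneg_mat V0"
    and "rank U0 = CARD('r)" and "rank V0 = CARD('r)"
    and "invertible (A1 ** X ** A2)"
    and "l1 > 0" and "l2 > 0"
    and "nonneg_mat Ut" and "nonneg_mat Vt"
    and "\<forall>U V. nonneg_mat U \<and> nonneg_mat V \<longrightarrow>
           nmf_obj X A1 A2 l1 l2 Ut Vt \<le> nmf_obj X A1 A2 l1 l2 U V"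
  shows "X = Ut ** transpose Vt"
proof -
  note X = assms(3)
  define B where "B = A1 ** X ** A2"
  obtain iB where iB: "B ** iB = mat 1" "iB ** B = mat 1"
    using assms(8) unfolding B_def invertible_def by blast
  define Pm where "Pm = A1 ** U0"
  define Qm where "Qm = transpose V0 ** A2"
  have "Pm ** (Qm ** iB) = mat 1"
    using iB(1) unfolding B_def Pm_def Qm_def X by (simp add: matrix_mul_assoc)
  hence QP: "Qm ** iB ** Pm = mat 1"
    using matrix_left_right_inverse by (metis matrix_mul_assoc)
  have key: "X ** A2 ** iB ** (A1 ** X) = X"
  proof -
    have "X ** A2 ** iB ** (A1 ** X) = U0 ** (Qm ** iB ** Pm) ** transpose V0"
      unfolding X Pm_def Qm_def by (simp add: matrix_mul_assoc)
    thus ?thesis using QP X by simp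
  qed
  define S1 where "S1 = span (columns (X ** A2))"
  define S2 where "S2 = span (columns (transpose (A1 ** X)))"
  have S2eq: "row_space (A1 ** X) = S2"
    unfolding S2_def row_space_def by (metis rows_transpose transpose_transpose)
  define P1 where "P1 = orth_proj_mat S1"
  define P2 where "P2 = orth_proj_mat S2"
  have XS1: "X *v x \<in> S1" for x
  proof -
    have "X *v x = (X ** A2) *v ((iB ** (A1 ** X)) *v x)"
      by (metis key matrix_mul_assoc matrix_vector_mul_assoc)
    thus ?thesis unfolding S1_def by (metis matrix_vector_mult_in_columnspace)
  qed
  have XS2: "transpose X *v x \<in> S2" for x
  proof -
    have "transpose X = transpose (A1 ** X) ** transpose (X ** A2 ** iB)"
      by (metis key matrix_transpose_mul)
    hence "transpose X *v x = transpose (A1 ** X) *v (transpose (X ** A2 ** iB) *v x)"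
      by (metis matrix_vector_mul_assoc)
    thus ?thesis unfolding S2_def by (metis matrix_vector_mult_in_columnspace)
  qed
  have t1: "(mat 1 - P1) ** X = 0"
  proof (rule matrix_eq[THEN iffD2], rule allI)
    fix x
    have "P1 *v (X *v x) = X *v x" unfolding P1_def S1_def
      by (rule proj_id) (use XS1 S1_def in simp)
    thus "((mat 1 - P1) ** X) *v x = 0 *v x"
      by (simp add: matrix_vector_mul_assoc[symmetric] matrix_vector_mult_diff_rdistrib)
  qed
  have t2: "X ** (mat 1 - P2) = 0"
  proof -
    have "(mat 1 - P2) ** transpose X = 0"
    proof (rule matrix_eq[THEN iffD2], rule allI)
      fix x
      have "P2 *v (transpose X *v x) = transpose X *v x" unfolding P2_def S2_def
        by (rule proj_id) (use XS2 S2_def in simp)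
      thus "((mat 1 - P2) ** transpose X) *v x = 0 *v x"
        by (simp add: matrix_vector_mul_assoc[symmetric] matrix_vector_mult_diff_rdistrib)
    qed
    moreover have "transpose (mat 1 - P2) = mat 1 - P2"
      using proj_sym[of "columns (transpose (A1 ** X))"]
      by (simp add: P2_def S2_def transpose_diff')
    ultimately have "transpose (X ** (mat 1 - P2)) = 0"
      by (simp add: matrix_transpose_mul)
    thus ?thesis by (metis transpose_transpose transpose_zero')
  qed
  have W0: "U0 ** transpose V0 = X" using X by simp
  have obj_eq: "nmf_obj X A1 A2 l1 l2 U V = frob_sq (A1 ** (X - U ** transpose V)) + frob_sq ((X - U ** transpose V) ** A2)
         + l1 * frob_sq ((mat 1 - P1) ** (U ** transpose V)) + l2 * frob_sq ((U ** transpose V) ** (mat 1 - P2))" for U V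
    unfolding nmf_obj_def Let_def col_space_def S2eq S1_def[symmetric] P1_def[symmetric] P2_def[symmetric]
    by (rule refl)
  have obj0: "nmf_obj X A1 A2 l1 l2 U0 V0 = 0"
    unfolding obj_eq W0 using t1 t2 by simp
  define W where "W = Ut ** transpose Vt"
  have "nmf_obj X A1 A2 l1 l2 Ut Vt \<le> nmf_obj X A1 A2 l1 l2 U0 V0"
    using assms(13) assms(4,5) by blast
  hence le: "frob_sq (A1 ** (X - W)) + frob_sq ((X - W) ** A2)
         + l1 * frob_sq ((mat 1 - P1) ** W) + l2 * frob_sq (W ** (mat 1 - P2)) \<le> 0"
    unfolding obj0 unfolding obj_eq W_def[symmetric] .
  have n1: "frob_sq (A1 ** (X - W)) \<ge> 0" "frob_sq ((X - W) ** A2) \<ge> 0"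
    by (rule frob_sq_nonneg)+
  have n3: "l1 * frob_sq ((mat 1 - P1) ** W) \<ge> 0" "l2 * frob_sq (W ** (mat 1 - P2)) \<ge> 0"
    using assms(9,10) frob_sq_nonneg[of "(mat 1 - P1) ** W"] frob_sq_nonneg[of "W ** (mat 1 - P2)"]
    by simp_all
  have z1: "frob_sq (A1 ** (X - W)) = 0" using le n1 n3 by linarith
  have "l1 * frob_sq ((mat 1 - P1) ** W) = 0" using le n1 n3 by linarith
  hence z3: "frob_sq ((mat 1 - P1) ** W) = 0" using assms(9) by simp
  have E1: "A1 ** (X - W) = 0" using frob_sq_zero[OF z1] .
  have E3: "(mat 1 - P1) ** W = 0" using frob_sq_zero[OF z3] .
  have "(X - W) *v x = 0" for x
  proof -
    have "(mat 1 - P1) *v (W *v x) = 0"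
      using E3 by (metis matrix_vector_mul_assoc matrix_vector_mult_0)
    hence "W *v x = P1 *v (W *v x)"
      by (simp add: matrix_vector_mult_diff_rdistrib)
    hence WS1: "W *v x \<in> S1" unfolding P1_def S1_def using proj_prop by metis
    have "(X - W) *v x = X *v x - W *v x" by (simp add: matrix_vector_mult_diff_rdistrib)
    hence "(X - W) *v x \<in> S1" using XS1 WS1 unfolding S1_def by (simp add: span_diff)
    then obtain m where m: "(X - W) *v x = (X ** A2) *v m"
      unfolding S1_def using span_columns_range by blast
    have "B *v m = A1 *v ((X - W) *v x)"
      unfolding m B_def by (simp add: matrix_vector_mul_assoc matrix_mul_assoc)
    also have "\<dots> = 0" using E1 by (metis matrix_vector_mul_assoc matrix_vector_mult_0)
    finally have "m = 0" using iB(2) by (metis matrix_vector_mul_assoc matrix_vector_mul_lid matrix_vector_mult_0_right)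
    thus ?thesis using m by simp
  qed
  hence "X - W = 0" by (metis matrix_eq matrix_vector_mult_0)
  thus ?thesis unfolding W_def by simp
qed

end
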